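(* The map $[0,\infty)\to\mathbb R$, $r\mapsto\sqrt{r\tanh(r)}$, is concave and possesses an extension $F:\mathbb R\to\mathbb R$ which is analytic, increasing and odd, such that $F'$ does not vanish on $\mathbb R$ and $F''$ vanishes only at the origin, where it has a simple zero. *)

theory Defs
  imports "HOL-Analysis.Analysis"
begin

definition real_analytic_on :: "(real \<Rightarrow> real) \<Rightarrow> real set \<Rightarrow> bool" where
  "real_analytic_on F S \<longleftrightarrow>
     (\<forall>x\<in>S. \<exists>a :: nat \<Rightarrow> real. \<exists>\<rho>>0.
        \<forall>y. \<bar>y - x\<bar> < \<rho> \<longrightarrow> (\<lambda>n. a n * (y - x) ^ n) sums F y)"

end

theory Submission
  imports Defs "HOL-Complex_Analysis.Complex_Analysis"
begin

definition gC :: "complex \<Rightarrow> complex" where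
  "gC z = (if z = 0 then 1 else tanh z / z)"

definition UC :: "complex set" where "UC = {z. cosh z \<noteq> 0}"

definition SC :: "complex set" where "SC = {z\<in>UC. gC z \<notin> \<real>\<^sub>\<le>\<^sub>0}"

definition HC :: "complex \<Rightarrow> complex" where "HC z = z * csqrt (gC z)"

definition FF :: "real \<Rightarrow> real" where
  "FF x = (if x < 0 then - sqrt (x * tanh x) else sqrt (x * tanh x))"

lemma open_UC: "open UC"
  unfolding UC_def by (intro open_Collect_neq continuous_intros)

lemma tanh_holo: "tanh holomorphic_on UC"
  unfolding holomorphic_on_def UC_def field_differentiable_def
  by (auto intro!: derivative_eq_intros)

lemma tanh_of_real: "tanh (complex_of_real x) = of_real (tanh x)"
  by (simp add: tanh_def sinh_field_def cosh_field_def exp_of_real flip: of_real_minus)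

lemma cosh_of_real: "cosh (complex_of_real x) = of_real (cosh x)"
  by (simp add: cosh_field_def exp_of_real flip: of_real_minus)

lemma deriv_tanh0: "deriv tanh (0::complex) = 1"
proof -
  have "(tanh has_field_derivative 1 - tanh 0 ^ 2) (at (0::complex))"
    by (auto intro!: derivative_eq_intros)
  then show ?thesis by (auto dest: DERIV_imp_deriv)
qed

lemma gC_holo: "gC holomorphic_on UC"
proof -
  have i0: "0 \<in> interior UC" using open_UC by (simp add: interior_open UC_def)
  have eq: "(\<lambda>z. if z=0 then deriv tanh 0 else (tanh z - tanh 0)/(z-0)) = gC"
    by (auto simp: deriv_tanh0 tanh_def gC_def)
  from pole_lemma[OF tanh_holo i0]
  show ?thesis unfolding eq .
qed

lemma open_SC: "open SC"
proof -
  have "open (UC \<inter> gC -` (- \<real>\<^sub>\<le>\<^sub>0))"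
    by (rule continuous_open_preimage[OF holomorphic_on_imp_continuous_on[OF gC_holo] open_UC])
       (simp add: open_Compl)
  moreover have "UC \<inter> gC -` (- \<real>\<^sub>\<le>\<^sub>0) = SC" unfolding SC_def by auto
  ultimately show ?thesis by simp
qed

lemma HC_holo: "HC holomorphic_on SC"
proof -
  have "gC holomorphic_on SC" using gC_holo holomorphic_on_subset SC_def by blast
  then show ?thesis unfolding HC_def
    by (intro holomorphic_intros) (auto simp: SC_def)
qed

lemma gC_real: "gC (of_real x) = of_real (if x = 0 then 1 else tanh x / x)"
  by (simp add: gC_def tanh_of_real)

lemma tanh_div_pos: "x \<noteq> 0 \<Longrightarrow> tanh x / x > (0::real)"
  by (cases "x > 0") (auto intro: divide_neg_neg)

lemma real_in_SC: "complex_of_real x \<in> SC"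
proof -
  have "cosh (complex_of_real x) \<noteq> 0"
    by (metis cosh_real_pos cosh_of_real less_irrefl of_real_eq_0_iff)
  moreover have "gC (of_real x) \<notin> \<real>\<^sub>\<le>\<^sub>0"
    using tanh_div_pos[of x] by (auto simp: gC_real nonpos_Reals_def)
  ultimately show ?thesis by (simp add: SC_def UC_def)
qed

lemma HC_real: "HC (of_real x) = of_real (FF x)"
proof (cases "x = 0")
  case True then show ?thesis by (simp add: HC_def FF_def gC_def)
next
  case False
  have p: "tanh x / x > 0" using tanh_div_pos[OF False] .
  have "HC (of_real x) = of_real (x * sqrt (tanh x / x))"
    using False p by (simp add: HC_def gC_real csqrt_of_real)
  moreover have "x * sqrt (tanh x / x) = FF x"
  proof -
    have e: "x * tanh x = x^2 * (tanh x / x)" using False by (simp add: power2_eq_square)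
    have "sqrt (x * tanh x) = sqrt (x^2) * sqrt (tanh x / x)"
      unfolding e real_sqrt_mult ..
    then have "sqrt (x * tanh x) = \<bar>x\<bar> * sqrt (tanh x / x)" by simp
    then show ?thesis by (auto simp: FF_def)
  qed
  ultimately show ?thesis by simp
qed

lemma Re_deriv_lemma:
  assumes "G holomorphic_on SC"
  shows "((\<lambda>t. Re (G (of_real t))) has_real_derivative Re (deriv G (of_real t))) (at t)"
proof -
  have "(G has_field_derivative deriv G (of_real t)) (at (of_real t))"
    by (rule holomorphic_derivI[OF assms open_SC real_in_SC])
  then have "((\<lambda>x. G (of_real x)) has_vector_derivative deriv G (of_real t)) (at t)"
    by (rule has_vector_derivative_real_field)
  then show ?thesis by (rule has_field_derivative_Re)
qed

lemma FF_derivs: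
  "(deriv ^^ n) FF = (\<lambda>t. Re ((deriv ^^ n) HC (of_real t)))"
proof (induction n)
  case 0
  show ?case by (auto simp: HC_real)
next
  case (Suc n)
  have h: "(deriv ^^ n) HC holomorphic_on SC"
    by (rule holomorphic_higher_deriv[OF HC_holo open_SC])
  show ?case
    by (rule ext) (simp add: Suc DERIV_imp_deriv[OF Re_deriv_lemma[OF h]])
qed

lemma FF_DERIV:
  "((deriv ^^ n) FF has_real_derivative (deriv ^^ Suc n) FF t) (at t)"
proof -
  have h: "(deriv ^^ n) HC holomorphic_on SC"
    by (rule holomorphic_higher_deriv[OF HC_holo open_SC])
  show ?thesis
    unfolding FF_derivs using Re_deriv_lemma[OF h] by simp
qed

lemma FF_analytic: "real_analytic_on FF UNIV"
  unfolding real_analytic_on_def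
proof
  fix x :: real
  obtain r where r: "r > 0" "ball (complex_of_real x) r \<subseteq> SC"
    using open_SC real_in_SC open_contains_ball by blast
  have hb: "HC holomorphic_on ball (of_real x) r" using HC_holo r(2) holomorphic_on_subset by blast
  show "\<exists>a. \<exists>\<rho>>0. \<forall>y. \<bar>y - x\<bar> < \<rho> \<longrightarrow> (\<lambda>n. a n * (y - x) ^ n) sums FF y"
  proof (intro exI[of _ "\<lambda>n. Re ((deriv ^^ n) HC (of_real x) / fact n)"] exI[of _ r] conjI allI impI r)
    fix y :: real assume y: "\<bar>y - x\<bar> < r"
    have yb: "of_real y \<in> ball (complex_of_real x) r"
      using y by (simp add: dist_norm flip: of_real_diff)
    have eqf: "Re (c * complex_of_real r / fact n) = Re (c / fact n) * r" for c r and n :: nat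
    proof -
      have "Re ((c / fact n) * complex_of_real r) = Re (c / fact n) * r"
        by (simp only: times_complex.sel) simp
      then show ?thesis by (simp only: times_divide_eq_left)
    qed
    from sums_Re[OF holomorphic_power_series[OF hb yb]]
    show "(\<lambda>n. Re ((deriv ^^ n) HC (of_real x) / fact n) * (y - x) ^ n) sums FF y"
      by (simp add: HC_real eqf flip: of_real_diff of_real_power)
  qed
qed

definition DD :: "nat \<Rightarrow> real \<Rightarrow> real" where "DD n = (deriv ^^ n) FF"

definition h1 :: "real \<Rightarrow> real" where "h1 x = tanh x + x * (1 - tanh x ^ 2)"
definition h2 :: "real \<Rightarrow> real" where "h2 x = 2 * (1 - tanh x ^ 2) * (1 - x * tanh x)"
definition h3 :: "real \<Rightarrow> real" where
  "h3 x = -4 * tanh x * (1 - tanh x ^ 2) * (1 - x * tanh x)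
          - 2 * (1 - tanh x ^ 2) * (tanh x + x * (1 - tanh x ^ 2))"

lemma cosh_ne0: "cosh (x::real) \<noteq> 0"
  using cosh_real_pos[of x] by linarith

lemma dD: "(DD n has_real_derivative DD (Suc n) x) (at x)"
  unfolding DD_def by (rule FF_DERIV)

lemma DD0: "DD 0 = FF" by (simp add: DD_def)

lemma dF: "(FF has_real_derivative DD 1 x) (at x)"
  using dD[of 0 x] by (simp add: DD0)

lemma dh: "((\<lambda>x. x * tanh x) has_real_derivative h1 x) (at x)"
  unfolding h1_def by (auto intro!: derivative_eq_intros simp: cosh_ne0)

lemma dh1: "(h1 has_real_derivative h2 x) (at x)"
proof -
  have "((\<lambda>x. tanh x + x * (1 - tanh x ^ 2)) has_real_derivative h2 x) (at x)"
    unfolding h2_def by (auto intro!: derivative_eq_intros simp: cosh_ne0 algebra_simps power2_eq_square)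
  then show ?thesis unfolding h1_def[abs_def] .
qed

lemma dh2: "(h2 has_real_derivative h3 x) (at x)"
proof -
  have "((\<lambda>x. 2 * (1 - tanh x ^ 2) * (1 - x * tanh x)) has_real_derivative h3 x) (at x)"
    unfolding h3_def by (auto intro!: derivative_eq_intros simp: cosh_ne0 algebra_simps power2_eq_square)
  then show ?thesis unfolding h2_def[abs_def] .
qed

lemma dh3: "(h3 has_real_derivative -8) (at 0)"
proof -
  have "((\<lambda>x. -4 * tanh x * (1 - tanh x ^ 2) * (1 - x * tanh x)
          - 2 * (1 - tanh x ^ 2) * (tanh x + x * (1 - tanh x ^ 2))) has_real_derivative -8) (at 0)"
    by (auto intro!: derivative_eq_intros simp: cosh_ne0)
  then show ?thesis unfolding h3_def[abs_def] .
qed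

lemma E0: "FF x * FF x = x * tanh x"
proof -
  have "0 \<le> x * tanh x"
    by (cases "x \<ge> 0") (auto intro: mult_nonneg_nonneg mult_nonpos_nonpos)
  then show ?thesis by (auto simp: FF_def)
qed

lemma E1: "2 * (FF x * DD 1 x) = h1 x"
proof (rule DERIV_unique)
  show "((\<lambda>x. FF x * FF x) has_real_derivative 2 * (FF x * DD 1 x)) (at x)"
    by (auto intro!: derivative_eq_intros dF simp: algebra_simps)
  have "(\<lambda>x. FF x * FF x) = (\<lambda>x. x * tanh x)" by (simp add: E0)
  then show "((\<lambda>x. FF x * FF x) has_real_derivative h1 x) (at x)" using dh by simp
qed

lemma E2: "2 * (DD 1 x * DD 1 x + FF x * DD 2 x) = h2 x"
proof (rule DERIV_unique)
  show "((\<lambda>x. 2 * (FF x * DD 1 x)) has_real_derivative 2 * (DD 1 x * DD 1 x + FF x * DD 2 x)) (at x)"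
    by (auto intro!: derivative_eq_intros dF dD simp: algebra_simps eval_nat_numeral)
  have "(\<lambda>x. 2 * (FF x * DD 1 x)) = h1" by (rule ext) (rule E1)
  then show "((\<lambda>x. 2 * (FF x * DD 1 x)) has_real_derivative h2 x) (at x)" using dh1 by simp
qed

lemma E3: "2 * (3 * (DD 1 x * DD 2 x) + FF x * DD 3 x) = h3 x"
proof (rule DERIV_unique)
  show "((\<lambda>x. 2 * (DD 1 x * DD 1 x + FF x * DD 2 x)) has_real_derivative
          2 * (3 * (DD 1 x * DD 2 x) + FF x * DD 3 x)) (at x)"
    by (auto intro!: derivative_eq_intros dF dD simp: algebra_simps eval_nat_numeral)
  have "(\<lambda>x. 2 * (DD 1 x * DD 1 x + FF x * DD 2 x)) = h2" by (rule ext) (rule E2)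
  then show "((\<lambda>x. 2 * (DD 1 x * DD 1 x + FF x * DD 2 x)) has_real_derivative h3 x) (at x)"
    using dh2 by simp
qed

lemma E4: "2 * (3 * (DD 2 0 * DD 2 0 + DD 1 0 * DD 3 0) + DD 1 0 * DD 3 0 + FF 0 * DD 4 0) = -8"
proof (rule DERIV_unique)
  show "((\<lambda>x. 2 * (3 * (DD 1 x * DD 2 x) + FF x * DD 3 x)) has_real_derivative
          2 * (3 * (DD 2 0 * DD 2 0 + DD 1 0 * DD 3 0) + DD 1 0 * DD 3 0 + FF 0 * DD 4 0)) (at 0)"
    by (auto intro!: derivative_eq_intros dF dD simp: algebra_simps eval_nat_numeral)
  have "(\<lambda>x. 2 * (3 * (DD 1 x * DD 2 x) + FF x * DD 3 x)) = h3" by (rule ext) (rule E3)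
  then show "((\<lambda>x. 2 * (3 * (DD 1 x * DD 2 x) + FF x * DD 3 x)) has_real_derivative -8) (at 0)"
    using dh3 by simp
qed

lemma FF0: "FF 0 = 0" by (simp add: FF_def)

lemma tanh0r: "tanh (0::real) = 0" by simp

lemma D1_0: "DD 1 0 * DD 1 0 = 1"
  using E2[of 0] by (simp add: FF0 h2_def)

lemma D1_0ne: "DD 1 0 \<noteq> 0"
  using D1_0 by auto

lemma D2_0: "DD 2 0 = 0"
  using E3[of 0] D1_0ne by (simp add: FF0 h3_def)

lemma D3_0: "DD 3 0 \<noteq> 0"
  using E4 by (auto simp: FF0 D2_0)

lemma key: assumes "x \<noteq> 0" shows "FF x * DD 2 x < 0"
proof -
  define t where "t = tanh x"
  define s where "s = 1 - t^2"
  have t0: "t \<noteq> 0" using assms by (simp add: t_def)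
  have s0: "s > 0" using tanh_real_bounds[of x] unfolding s_def t_def
    by (simp add: abs_square_less_1 abs_less_iff)
  have e0: "FF x * FF x = x * t" using E0 by (simp add: t_def)
  have e1: "2 * (FF x * DD 1 x) = t + x * s" using E1 by (simp add: t_def s_def h1_def)
  have e2: "2 * (DD 1 x * DD 1 x + FF x * DD 2 x) = 2 * s * (1 - x * t)"
    using E2 by (simp add: t_def s_def h2_def)
  have id: "-4 * (FF x * FF x) * (FF x * DD 2 x) = (t - x * s)^2 + 4 * x^2 * t^2 * s"
  proof -
    have "-4 * (FF x * FF x) * (FF x * DD 2 x)
        = (2 * (FF x * DD 1 x))^2 - 2 * (FF x * FF x) * (2 * (DD 1 x * DD 1 x + FF x * DD 2 x))"
      by (simp add: algebra_simps power2_eq_square)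
    also have "\<dots> = (t + x * s)^2 - 2 * (x * t) * (2 * s * (1 - x * t))"
      unfolding e0 e1 e2 ..
    also have "\<dots> = (t - x * s)^2 + 4 * x^2 * t^2 * s"
      by (simp add: algebra_simps power2_eq_square)
    finally show ?thesis .
  qed
  have "4 * x^2 * t^2 * s > 0" using assms t0 s0 by simp
  moreover have "(t - x * s)^2 \<ge> 0" by simp
  ultimately have "-4 * (FF x * FF x) * (FF x * DD 2 x) > 0" unfolding id by linarith
  moreover have "FF x * FF x > 0"
  proof -
    have "FF x \<noteq> 0" using e0 assms t0 by auto
    then show ?thesis by (metis not_real_square_gt_zero)
  qed
  ultimately show ?thesis by (simp add: mult_less_0_iff zero_less_mult_iff)
qed

lemma D1_ne: "DD 1 x \<noteq> 0"
proof (cases "x = 0")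
  case True then show ?thesis using D1_0ne by simp
next
  case False
  have s0: "1 - tanh x ^ 2 > 0" using tanh_real_bounds[of x]
    by (simp add: abs_square_less_1 abs_less_iff)
  have "h1 x \<noteq> 0"
  proof (cases "x > 0")
    case True
    then have "h1 x > 0" unfolding h1_def using s0 by (simp add: add_pos_pos)
    then show ?thesis by simp
  next
    case False
    with \<open>x \<noteq> 0\<close> have "x < 0" by simp
    then have "x * (1 - tanh x ^ 2) < 0" using s0 by (simp add: mult_neg_pos)
    moreover have "tanh x < 0" using \<open>x < 0\<close> by simp
    ultimately have "h1 x < 0" unfolding h1_def by linarith
    then show ?thesis by simp
  qed
  then show ?thesis using E1[of x] by auto
qed

lemma FF_pos: "x > 0 \<Longrightarrow> FF x > 0"
  by (simp add: FF_def)

lemma D2_ne: "DD 2 x = 0 \<longleftrightarrow> x = 0"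
  using key[of x] D2_0 by (cases "x = 0") auto

lemma D2_le: "x \<ge> 0 \<Longrightarrow> DD 2 x \<le> 0"
proof (cases "x = 0")
  case True then show ?thesis by (simp add: D2_0)
next
  case False
  assume "x \<ge> 0"
  then have "x > 0" using False by simp
  then show ?thesis using key[OF False] FF_pos[of x] by (simp add: mult_less_0_iff)
qed

lemma FF_odd: "FF (- x) = - FF x"
  by (cases "x < 0") (auto simp: FF_def)

lemma h_mono: "0 \<le> a \<Longrightarrow> a < b \<Longrightarrow> a * tanh a < b * tanh (b::real)"
proof -
  assume a: "0 \<le> a" "a < b"
  have "a * tanh a \<le> a * tanh b" using a by (intro mult_left_mono) auto
  also have "\<dots> < b * tanh b" using a by (intro mult_strict_right_mono) auto
  finally show ?thesis .
qed

lemma FF_nonneg_mono: "0 \<le> a \<Longrightarrow> a < b \<Longrightarrow> FF a < FF b"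
  using h_mono[of a b] by (simp add: FF_def)

lemma FF_strict_mono: "strict_mono FF"
proof (rule strict_monoI)
  fix x y :: real assume xy: "x < y"
  show "FF x < FF y"
  proof (cases "x \<ge> 0")
    case True then show ?thesis using FF_nonneg_mono xy by simp
  next
    case False
    show ?thesis
    proof (cases "y \<ge> 0")
      case True
      have "FF x < 0" using False FF_pos[of "-x"] FF_odd[of x] by simp
      moreover have "FF y \<ge> 0" using True by (simp add: FF_def)
      ultimately show ?thesis by simp
    next
      case False2: False
      have "FF (-y) < FF (-x)" using FF_nonneg_mono[of "-y" "-x"] xy False2 by simp
      then show ?thesis using FF_odd[of x] FF_odd[of y] by simp
    qed
  qed
qed

lemma concave_cong:
  assumes "\<forall>x\<in>S. f x = g x" "concave_on S f"
  shows "concave_on S g"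
  using assms by (auto simp: concave_on_def convex_on_def convex_def)

lemma FF_concave: "concave_on {0..} FF"
proof (rule f''_le0_imp_concave[where f' = "DD 1" and f'' = "DD 2"])
  show "convex {0::real..}" by (simp add: convex_real_interval)
  fix x :: real
  show "(FF has_real_derivative DD 1 x) (at x)" by (rule dF)
  show "(DD 1 has_real_derivative DD 2 x) (at x)" using dD[of 1 x] by (simp add: numeral_2_eq_2)
  show "DD 2 x \<le> 0" if "x \<in> {0..}" using D2_le that by simp
qed

theorem lemma3p2:
  shows "concave_on {0..} (\<lambda>r::real. sqrt (r * tanh r)) \<and>
    (\<exists>F :: real \<Rightarrow> real.
        (\<forall>r\<ge>0. F r = sqrt (r * tanh r)) \<and>
        real_analytic_on F UNIV \<and>
        strict_mono F \<and>
        (\<forall>x. F (- x) = - F x) \<and>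
        (\<forall>x. deriv F x \<noteq> 0) \<and>
        (\<forall>x. deriv (deriv F) x = 0 \<longleftrightarrow> x = 0) \<and>
        deriv (deriv (deriv F)) 0 \<noteq> 0)"
proof (intro conjI exI[of _ FF] allI impI)
  show "concave_on {0..} (\<lambda>r::real. sqrt (r * tanh r))"
    by (rule concave_cong[OF _ FF_concave]) (simp add: FF_def)
  show "FF r = sqrt (r * tanh r)" if "r \<ge> 0" for r using that by (simp add: FF_def)
  show "real_analytic_on FF UNIV" by (rule FF_analytic)
  show "strict_mono FF" by (rule FF_strict_mono)
  show "FF (- x) = - FF x" for x by (rule FF_odd)
  have d1: "deriv FF = DD 1" by (simp add: DD_def)
  have d2: "deriv (deriv FF) = DD 2" by (simp add: DD_def eval_nat_numeral)
  have d3: "deriv (deriv (deriv FF)) = DD 3" by (simp add: DD_def eval_nat_numeral)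
  show "deriv FF x \<noteq> 0" for x using D1_ne by (simp add: d1)
  show "deriv (deriv FF) x = 0 \<longleftrightarrow> x = 0" for x using D2_ne by (simp add: d2)
  show "deriv (deriv (deriv FF)) 0 \<noteq> 0" using D3_0 by (simp add: d3)
qed

end
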